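(* Consider a restless bandit, set system $(N^{\{0,1\}},\mathcal F)$ as in the context, suppose the bandit is PCL-indexable relative to $b^u$ and $\mathcal F$-policies, with the adaptive-greedy algorithm on input $\widehat{\mathbf h}^0_{N^{\{0,1\}}}$ producing $\boldsymbol\pi$ and $\boldsymbol\nu$, and let $S_k=\{\pi_k,\dots,\pi_n\}$. Suppose further that $w^S_j\le w^T_j$ whenever $j\in S\subset T$ with $S,T\in\mathcal F$. Then for every $j\in N^{\{0,1\}}$, $$\nu_j=\max\left\{\frac{v^{S\setminus\{j\}}_j-v^S_j}{b^S_j-b^{S\setminus\{j\}}_j}:j\in S\in\{S_1,\dots,S_n\}\right\}.$$
   Context: Restless bandit: finite state space $N=N^{\{0,1\}}\cup N^{\{1\}}$ (disjoint); actions $a\in\{0,1\}$; one-period costs $h^a_i$, transition probabilities $p^a_{ij}$ with $p^1_{ij}=p^0_{ij}$ for $i\in N^{\{1\}}$; discount factor $\beta\in(0,1)$; activity weights $\theta^1_j>0$. Stationary policies $u:N\to[0,1]$ with $u(i)=1$ on $N^{\{1\}}$. $v^u_i=E^u_i[\sum_{t\ge0}h^{a(t)}_{X(t)}\beta^t]$, $b^u_i=E^u_i[\sum_{t\ge0}\theta^1_{X(t)}a(t)\beta^t]$. For $S\subseteq N^{\{0,1\}}$ the $S$-active policy is active on $S\cup N^{\{1\}}$, passive elsewhere; $v^S_i,b^S_i$ its measures. Marginal workloads $w^S_i=\theta^1_i1\{i\in N^{\{0,1\}}\}+\beta\sum_j(p^1_{ij}-p^0_{ij})b^S_j$. $\widehat{\mathbf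 h}^0=\mathbf h^0-(\mathbf I-\beta\mathbf P^0)(\mathbf I-\beta\mathbf P^1)^{-1}\mathbf h^1$. $\mathcal F\subseteq2^{N^{\{0,1\}}}$: $\emptyset\in\mathcal F$; each nonempty $S\in\mathcal F$ has nonempty $\partial^-S=\{j\in S:S\setminus\{j\}\in\mathcal F\}$; each $S\in\mathcal F$ other than $N^{\{0,1\}}$ has $j\notin S$ with $S\cup\{j\}\in\mathcal F$. Adaptive-greedy algorithm on input $\mathbf c$, $n=|N^{\{0,1\}}|$: $S_1=N^{\{0,1\}}$, $y^{S_1}=\min\{c_j/w^{S_1}_j:j\in\partial^-S_1\}$, $\pi_1$ a minimizer, $\nu_{\pi_1}=y^{S_1}$; for $k=2..n$: $S_k=S_{k-1}\setminus\{\pi_{k-1}\}$, $y^{S_k}=\min\{(c_j-\sum_{l<k}y^{S_l}w^{S_l}_j)/w^{S_k}_j:j\in\partial^-S_k\}$, $\pi_k$ a minimizer, $\nu_{\pi_k}=\nu_{\pi_{k-1}}+y^{S_k}$. PCL-indexability: (i) $w^S_j>0$ for $S\in\mathcal F$, $j\in N^{\{0,1\}}$; (ii) on input $(\widehat h^0_j)_{j\in N^{\{0,1\}}}$ the output satisfies $\nu_{\pi_1}\le\cdots\le\nu_{\pi_n}$. *)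

theory Defs
  imports "HOL-Analysis.Analysis"
begin

text \<open>State space: a finite type 's.  N1 is the set of states where only the
active action is available (N^{1}); its complement -N1 is N^{0,1}.
Actions: True = active (1), False = passive (0).\<close>

fun mpow :: "('s::finite \<Rightarrow> 's \<Rightarrow> real) \<Rightarrow> nat \<Rightarrow> 's \<Rightarrow> 's \<Rightarrow> real" where
  "mpow Q 0 i j = (if i = j then 1 else 0)"
| "mpow Q (Suc t) i j = (\<Sum>k\<in>UNIV. Q i k * mpow Q t k j)"

definition disc_val :: "real \<Rightarrow> ('s::finite \<Rightarrow> 's \<Rightarrow> real) \<Rightarrow> ('s \<Rightarrow> real) \<Rightarrow> 's \<Rightarrow> real" where
  "disc_val \<beta> Q r i = (\<Sum>t. \<beta> ^ t * (\<Sum>j\<in>UNIV. mpow Q t i j * r j))"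

definition polP :: "('s \<Rightarrow> 's \<Rightarrow> real) \<Rightarrow> ('s \<Rightarrow> 's \<Rightarrow> real) \<Rightarrow> 's set \<Rightarrow> 's set \<Rightarrow> 's \<Rightarrow> 's \<Rightarrow> real" where
  "polP P0 P1 N1 S i j = (if i \<in> S \<union> N1 then P1 i j else P0 i j)"

definition vS :: "real \<Rightarrow> ('s::finite \<Rightarrow> 's \<Rightarrow> real) \<Rightarrow> ('s \<Rightarrow> 's \<Rightarrow> real) \<Rightarrow> ('s \<Rightarrow> real) \<Rightarrow> ('s \<Rightarrow> real)
     \<Rightarrow> 's set \<Rightarrow> 's set \<Rightarrow> 's \<Rightarrow> real" where
  "vS \<beta> P0 P1 h0 h1 N1 S i =
     disc_val \<beta> (polP P0 P1 N1 S) (\<lambda>j. if j \<in> S \<union> N1 then h1 j else h0 j) i"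

definition bS :: "real \<Rightarrow> ('s::finite \<Rightarrow> 's \<Rightarrow> real) \<Rightarrow> ('s \<Rightarrow> 's \<Rightarrow> real) \<Rightarrow> ('s \<Rightarrow> real)
     \<Rightarrow> 's set \<Rightarrow> 's set \<Rightarrow> 's \<Rightarrow> real" where
  "bS \<beta> P0 P1 \<theta> N1 S i =
     disc_val \<beta> (polP P0 P1 N1 S) (\<lambda>j. if j \<in> S \<union> N1 then \<theta> j else 0) i"

definition wS :: "real \<Rightarrow> ('s::finite \<Rightarrow> 's \<Rightarrow> real) \<Rightarrow> ('s \<Rightarrow> 's \<Rightarrow> real) \<Rightarrow> ('s \<Rightarrow> real)
     \<Rightarrow> 's set \<Rightarrow> 's set \<Rightarrow> 's \<Rightarrow> real" where
  "wS \<beta> P0 P1 \<theta> N1 S i =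
     (if i \<notin> N1 then \<theta> i else 0)
     + \<beta> * (\<Sum>j\<in>UNIV. (P1 i j - P0 i j) * bS \<beta> P0 P1 \<theta> N1 S j)"

text \<open>hhat^0 = h^0 - (I - beta P^0)(I - beta P^1)^{-1} h^1, where
 (I - beta P^1)^{-1} h^1 = sum_t beta^t (P^1)^t h^1 (Neumann series).\<close>
definition hhat0 :: "real \<Rightarrow> ('s::finite \<Rightarrow> 's \<Rightarrow> real) \<Rightarrow> ('s \<Rightarrow> 's \<Rightarrow> real) \<Rightarrow> ('s \<Rightarrow> real)
     \<Rightarrow> ('s \<Rightarrow> real) \<Rightarrow> 's \<Rightarrow> real" where
  "hhat0 \<beta> P0 P1 h0 h1 i =
     (let g = disc_val \<beta> P1 h1 in h0 i - (g i - \<beta> * (\<Sum>j\<in>UNIV. P0 i j * g j)))"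

definition set_system :: "'s set \<Rightarrow> 's set set \<Rightarrow> bool" where
  "set_system N F \<longleftrightarrow> F \<subseteq> Pow N \<and> {} \<in> F
     \<and> (\<forall>S\<in>F. S \<noteq> {} \<longrightarrow> (\<exists>j\<in>S. S - {j} \<in> F))
     \<and> (\<forall>S\<in>F. S \<noteq> N \<longrightarrow> (\<exists>j\<in>N - S. insert j S \<in> F))"

definition bdry :: "'s set set \<Rightarrow> 's set \<Rightarrow> 's set" where
  "bdry F S = {j \<in> S. S - {j} \<in> F}"

text \<open>(pi, nu) is an output of the adaptive-greedy algorithm on input c
 (indices k = 1..n, n = card N, S_k = N - {pi_1,...,pi_{k-1}}).\<close>
definition AG_output :: "'s set \<Rightarrow> 's set set \<Rightarrow> ('s set \<Rightarrow> 's \<Rightarrow> real) \<Rightarrow> ('s \<Rightarrow> real)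
     \<Rightarrow> (nat \<Rightarrow> 's) \<Rightarrow> ('s \<Rightarrow> real) \<Rightarrow> bool" where
  "AG_output N F w c \<pi> \<nu> \<longleftrightarrow>
     (let n = card N; Sk = (\<lambda>k. N - \<pi> ` {1..<k}) in
      \<exists>y :: nat \<Rightarrow> real.
        (\<forall>k\<in>{1..n}.
           \<pi> k \<in> bdry F (Sk k)
         \<and> y k = (c (\<pi> k) - (\<Sum>l\<in>{1..<k}. y l * w (Sk l) (\<pi> k))) / w (Sk k) (\<pi> k)
         \<and> (\<forall>j\<in>bdry F (Sk k).
               y k \<le> (c j - (\<Sum>l\<in>{1..<k}. y l * w (Sk l) j)) / w (Sk k) j)
         \<and> \<nu> (\<pi> k) = (\<Sum>l\<in>{1..k}. y l)))"

end

theory Submission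
  imports Defs
begin


lemma mpow_nonneg:
  assumes "\<And>i j. 0 \<le> Q i j" shows "0 \<le> mpow Q t i j"
  by (induction t arbitrary: i) (auto intro!: sum_nonneg mult_nonneg_nonneg assms)

lemma mpow_rowsum:
  fixes Q :: "'s::finite \<Rightarrow> 's \<Rightarrow> real"
  assumes "\<And>i. (\<Sum>j\<in>UNIV. Q i j) = 1" shows "(\<Sum>j\<in>UNIV. mpow Q t i j) = 1"
proof (induction t arbitrary: i)
  case 0 then show ?case by (simp add: sum.delta)
next
  case (Suc t)
  have "(\<Sum>j\<in>UNIV. mpow Q (Suc t) i j) = (\<Sum>k\<in>UNIV. Q i k * (\<Sum>j\<in>UNIV. mpow Q t k j))"
    by (simp add: sum_distrib_left) (rule sum.swap)
  also have "\<dots> = 1" using Suc assms by simp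
  finally show ?case .
qed

lemma mpow_bound:
  fixes Q :: "'s::finite \<Rightarrow> 's \<Rightarrow> real"
  assumes nn: "\<And>i j. 0 \<le> Q i j" and st: "\<And>i. (\<Sum>j\<in>UNIV. Q i j) = 1"
  shows "\<bar>\<Sum>j\<in>UNIV. mpow Q t i j * r j\<bar> \<le> (\<Sum>j\<in>UNIV. \<bar>r j\<bar>)"
proof -
  have "\<bar>\<Sum>j\<in>UNIV. mpow Q t i j * r j\<bar> \<le> (\<Sum>j\<in>UNIV. mpow Q t i j * \<bar>r j\<bar>)"
    by (rule order_trans[OF sum_abs]) (simp add: abs_mult mpow_nonneg[OF nn])
  also have "\<dots> \<le> (\<Sum>j\<in>UNIV. mpow Q t i j * (\<Sum>j\<in>UNIV. \<bar>r j\<bar>))"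
    by (intro sum_mono mult_left_mono) (auto simp: mpow_nonneg[OF nn] intro: member_le_sum)
  also have "\<dots> = (\<Sum>j\<in>UNIV. \<bar>r j\<bar>)"
    by (simp add: sum_distrib_right[symmetric] mpow_rowsum[OF st])
  finally show ?thesis .
qed

lemma disc_summable:
  fixes Q :: "'s::finite \<Rightarrow> 's \<Rightarrow> real"
  assumes nn: "\<And>i j. 0 \<le> Q i j" and st: "\<And>i. (\<Sum>j\<in>UNIV. Q i j) = 1"
    and b: "0 \<le> \<beta>" "\<beta> < 1"
  shows "summable (\<lambda>t. \<beta> ^ t * (\<Sum>j\<in>UNIV. mpow Q t i j * r j))"
proof (rule summable_comparison_test)
  show "summable (\<lambda>t. \<beta> ^ t * (\<Sum>j\<in>UNIV. \<bar>r j\<bar>))"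
    by (rule summable_mult2) (use b in simp)
  show "\<exists>N. \<forall>n\<ge>N. norm (\<beta> ^ n * (\<Sum>j\<in>UNIV. mpow Q n i j * r j)) \<le> \<beta> ^ n * (\<Sum>j\<in>UNIV. \<bar>r j\<bar>)"
    using b by (auto simp: abs_mult intro!: mult_left_mono mpow_bound[OF nn st])
qed

lemma disc_bellman:
  fixes Q :: "'s::finite \<Rightarrow> 's \<Rightarrow> real"
  assumes nn: "\<And>i j. 0 \<le> Q i j" and st: "\<And>i. (\<Sum>j\<in>UNIV. Q i j) = 1"
    and b: "0 \<le> \<beta>" "\<beta> < 1"
  shows "disc_val \<beta> Q r i = r i + \<beta> * (\<Sum>k\<in>UNIV. Q i k * disc_val \<beta> Q r k)"
proof -
  define s where "s = (\<lambda>i t. \<beta> ^ t * (\<Sum>j\<in>UNIV. mpow Q t i j * r j))"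
  have sm: "summable (s i)" for i unfolding s_def by (rule disc_summable[OF nn st b])
  have s0: "s i 0 = r i"
  proof -
    have "(\<Sum>j\<in>UNIV. (if i = j then 1 else 0) * r j) = (\<Sum>j\<in>UNIV. if i = j then r j else 0)"
      by (rule sum.cong) auto
    then show ?thesis unfolding s_def by simp
  qed
  have sS: "s i (Suc n) = (\<Sum>k\<in>UNIV. \<beta> * (Q i k * s k n))" for n
  proof -
    have "(\<Sum>j\<in>UNIV. mpow Q (Suc n) i j * r j) = (\<Sum>k\<in>UNIV. Q i k * (\<Sum>j\<in>UNIV. mpow Q n k j * r j))"
      by (simp add: sum_distrib_left sum_distrib_right mult.assoc) (rule sum.swap)
    then show ?thesis unfolding s_def by (simp add: sum_distrib_left algebra_simps)
  qed
  have "disc_val \<beta> Q r i = s i 0 + (\<Sum>n. s i (Suc n))"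
    using suminf_split_head[OF sm[of i]] unfolding disc_val_def s_def by simp
  also have "(\<Sum>n. s i (Suc n)) = (\<Sum>k\<in>UNIV. \<Sum>n. \<beta> * (Q i k * s k n))"
    unfolding sS by (rule suminf_sum) (intro summable_mult sm)
  also have "\<dots> = (\<Sum>k\<in>UNIV. \<beta> * (Q i k * suminf (s k)))"
    by (simp add: suminf_mult sm summable_mult)
  finally show ?thesis using s0 unfolding disc_val_def s_def by (simp add: sum_distrib_left)
qed

lemma fix_zero:
  fixes Q :: "'s::finite \<Rightarrow> 's \<Rightarrow> real"
  assumes nn: "\<And>i j. 0 \<le> Q i j" and st: "\<And>i. (\<Sum>j\<in>UNIV. Q i j) = 1"
    and b: "0 \<le> \<beta>" "\<beta> < 1"
    and D: "\<And>k. D k = \<beta> * (\<Sum>l\<in>UNIV. Q k l * D l)"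
  shows "D k = 0"
proof -
  define M where "M = Max (range (\<lambda>k. \<bar>D k\<bar>))"
  have le: "\<bar>D k\<bar> \<le> M" for k unfolding M_def by (rule Max_ge) auto
  have "\<bar>D k\<bar> \<le> \<beta> * M" for k
  proof -
    have "\<bar>D k\<bar> = \<beta> * \<bar>\<Sum>l\<in>UNIV. Q k l * D l\<bar>" using b by (subst D) (simp add: abs_mult)
    also have "\<bar>\<Sum>l\<in>UNIV. Q k l * D l\<bar> \<le> (\<Sum>l\<in>UNIV. Q k l * M)"
      by (rule order_trans[OF sum_abs]) (auto intro!: sum_mono mult_left_mono le simp: abs_mult nn)
    also have "\<dots> = M" by (simp add: sum_distrib_right[symmetric] st)
    finally show ?thesis using b by (simp add: mult_left_mono)
  qed
  moreover obtain k0 where "M = \<bar>D k0\<bar>"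
  proof -
    have "M \<in> range (\<lambda>k. \<bar>D k\<bar>)" unfolding M_def by (rule Max_in) auto
    then show ?thesis using that by blast
  qed
  ultimately have "M \<le> \<beta> * M" by metis
  moreover have "0 \<le> M" using le[of k] by simp
  ultimately have "M = 0"
  proof -
    assume a1: "M \<le> \<beta> * M" and a2: "0 \<le> M"
    have "\<not> 0 < M"
    proof
      assume "0 < M"
      then have "\<beta> * M < 1 * M" using b by (intro mult_strict_right_mono) auto
      then show False using a1 by simp
    qed
    then show ?thesis using a2 by simp
  qed
  then show ?thesis using le[of k] by simp
qed

lemma fix_ge:
  fixes Q :: "'s::finite \<Rightarrow> 's \<Rightarrow> real"
  assumes nn: "\<And>i j. 0 \<le> Q i j" and st: "\<And>i. (\<Sum>j\<in>UNIV. Q i j) = 1"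
    and b: "0 \<le> \<beta>" "\<beta> < 1"
    and a: "\<And>k. 0 \<le> a k"
    and x: "\<And>k. x k = a k + \<beta> * (\<Sum>l\<in>UNIV. Q k l * x l)"
  shows "a k \<le> x k"
proof -
  define m where "m = Min (range x)"
  have le: "m \<le> x k" for k unfolding m_def by (rule Min_le) auto
  obtain k0 where k0: "m = x k0"
  proof -
    have "m \<in> range x" unfolding m_def by (rule Min_in) auto
    then show ?thesis using that by blast
  qed
  have sge: "(\<Sum>l\<in>UNIV. Q k l * x l) \<ge> m" for k
  proof -
    have "(\<Sum>l\<in>UNIV. Q k l * x l) \<ge> (\<Sum>l\<in>UNIV. Q k l * m)"
      by (auto intro!: sum_mono mult_left_mono le nn)
    then show ?thesis by (simp add: sum_distrib_right[symmetric] st)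
  qed
  have "m \<ge> 0"
  proof (rule ccontr)
    assume "\<not> 0 \<le> m"
    have "\<beta> * m \<le> \<beta> * (\<Sum>l\<in>UNIV. Q k0 l * x l)" by (rule mult_left_mono[OF sge[of k0]]) (use b in simp)
    then have "x k0 \<ge> \<beta> * m" using x[of k0] a[of k0] by linarith
    moreover have "1 * m < \<beta> * m" using \<open>\<not> 0 \<le> m\<close> b by (intro mult_strict_right_mono_neg) auto
    then have "\<beta> * m > m" by simp
    ultimately show False using k0 by simp
  qed
  have "\<beta> * (\<Sum>l\<in>UNIV. Q k l * x l) \<ge> 0"
    using sge[of k] \<open>m \<ge> 0\<close> b by (intro mult_nonneg_nonneg) auto
  then show ?thesis using x[of k] by simp
qed




locale rb =
  fixes \<beta> :: real and P0 P1 :: "'s::finite \<Rightarrow> 's \<Rightarrow> real" and h0 h1 \<theta> :: "'s \<Rightarrow> real"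
    and N1 :: "'s set"
  assumes beta: "0 < \<beta>" "\<beta> < 1"
    and P0_nonneg: "\<And>i j. 0 \<le> P0 i j" and P0_stoch: "\<And>i. (\<Sum>j\<in>UNIV. P0 i j) = 1"
    and P1_nonneg: "\<And>i j. 0 \<le> P1 i j" and P1_stoch: "\<And>i. (\<Sum>j\<in>UNIV. P1 i j) = 1"
begin

abbreviation "v S \<equiv> vS \<beta> P0 P1 h0 h1 N1 S"
abbreviation "b S \<equiv> bS \<beta> P0 P1 \<theta> N1 S"
abbreviation "w S \<equiv> wS \<beta> P0 P1 \<theta> N1 S"
abbreviation "Q S \<equiv> polP P0 P1 N1 S"
definition "c S j = h0 j - h1 j - \<beta> * (\<Sum>k\<in>UNIV. (P1 j k - P0 j k) * v S k)"

lemma Q_nonneg: "0 \<le> Q S i j"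
  unfolding polP_def using P0_nonneg P1_nonneg by auto

lemma Q_stoch: "(\<Sum>j\<in>UNIV. Q S i j) = 1"
  by (cases "i \<in> S \<union> N1") (auto simp: polP_def P0_stoch P1_stoch)

lemma beta0: "0 \<le> \<beta>" using beta by simp

lemma v_bell: "v S i = (if i \<in> S \<union> N1 then h1 i else h0 i) + \<beta> * (\<Sum>k\<in>UNIV. Q S i k * v S k)"
  unfolding vS_def
  by (subst disc_bellman[OF Q_nonneg Q_stoch beta0 beta(2)]) simp

lemma b_bell: "b S i = (if i \<in> S \<union> N1 then \<theta> i else 0) + \<beta> * (\<Sum>k\<in>UNIV. Q S i k * b S k)"
  unfolding bS_def
  by (subst disc_bellman[OF Q_nonneg Q_stoch beta0 beta(2)]) simp

lemma diff_eq:
  assumes X: "\<And>k. X k = r k + \<beta> * (\<Sum>l\<in>UNIV. A k l * X l)"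
    and Y: "\<And>k. Y k = r' k + \<beta> * (\<Sum>l\<in>UNIV. B k l * Y l)"
  shows "X k - Y k = (r k - r' k + \<beta> * (\<Sum>l\<in>UNIV. (A k l - B k l) * X l))
             + \<beta> * (\<Sum>l\<in>UNIV. B k l * (X l - Y l))"
proof -
  have "X k - Y k = r k - r' k + \<beta> * ((\<Sum>l\<in>UNIV. A k l * X l) - (\<Sum>l\<in>UNIV. B k l * Y l))"
    using X[of k] Y[of k] by (simp add: algebra_simps)
  also have "(\<Sum>l\<in>UNIV. A k l * X l) - (\<Sum>l\<in>UNIV. B k l * Y l)
       = (\<Sum>l\<in>UNIV. (A k l - B k l) * X l) + (\<Sum>l\<in>UNIV. B k l * (X l - Y l))"
    by (simp add: sum.distrib[symmetric] sum_subtractf[symmetric] algebra_simps)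
  finally show ?thesis by (simp add: algebra_simps)
qed

lemma sub_sum: "(\<Sum>l\<in>UNIV. (A::'s\<Rightarrow>real) l * X l) - (\<Sum>l\<in>UNIV. A l * Y l) = (\<Sum>l\<in>UNIV. A l * (X l - Y l))"
  by (simp add: sum_subtractf[symmetric] right_diff_distrib)

lemma scal_sum: "(\<Sum>l\<in>UNIV. (A::'s\<Rightarrow>real) l * (\<alpha> * X l)) = \<alpha> * (\<Sum>l\<in>UNIV. A l * X l)"
  by (simp add: sum_distrib_left mult.left_commute)

lemma lin_sum: "(\<Sum>l\<in>UNIV. (A::'s\<Rightarrow>real) l * (\<alpha> * X l + \<gamma> * Y l)) = \<alpha> * (\<Sum>l\<in>UNIV. A l * X l) + \<gamma> * (\<Sum>l\<in>UNIV. A l * Y l)"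
  by (simp add: sum.distrib sum_distrib_left distrib_left mult.left_commute)

context
  fixes S i assumes iS: "i \<in> S" and iN: "i \<notin> N1"
begin

lemma dV: "v S k - v (S - {i}) k = (if k = i then - c S i else 0)
    + \<beta> * (\<Sum>l\<in>UNIV. Q (S - {i}) k l * (v S l - v (S - {i}) l))"
proof -
  have "v S k - v (S - {i}) k = ((if k \<in> S \<union> N1 then h1 k else h0 k) - (if k \<in> (S - {i}) \<union> N1 then h1 k else h0 k)
       + \<beta> * (\<Sum>l\<in>UNIV. (Q S k l - Q (S - {i}) k l) * v S l))
             + \<beta> * (\<Sum>l\<in>UNIV. Q (S - {i}) k l * (v S l - v (S - {i}) l))"
    by (rule diff_eq) (rule v_bell)+
  also have "((if k \<in> S \<union> N1 then h1 k else h0 k) - (if k \<in> (S - {i}) \<union> N1 then h1 k else h0 k)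
       + \<beta> * (\<Sum>l\<in>UNIV. (Q S k l - Q (S - {i}) k l) * v S l)) = (if k = i then - c S i else 0)"
    using iS iN by (auto simp: polP_def c_def algebra_simps)
  finally show ?thesis .
qed

lemma dB: "b S k - b (S - {i}) k = (if k = i then w S i else 0)
    + \<beta> * (\<Sum>l\<in>UNIV. Q (S - {i}) k l * (b S l - b (S - {i}) l))"
proof -
  have "b S k - b (S - {i}) k = ((if k \<in> S \<union> N1 then \<theta> k else 0) - (if k \<in> (S - {i}) \<union> N1 then \<theta> k else 0)
       + \<beta> * (\<Sum>l\<in>UNIV. (Q S k l - Q (S - {i}) k l) * b S l))
             + \<beta> * (\<Sum>l\<in>UNIV. Q (S - {i}) k l * (b S l - b (S - {i}) l))"
    by (rule diff_eq) (rule b_bell)+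
  also have "((if k \<in> S \<union> N1 then \<theta> k else 0) - (if k \<in> (S - {i}) \<union> N1 then \<theta> k else 0)
       + \<beta> * (\<Sum>l\<in>UNIV. (Q S k l - Q (S - {i}) k l) * b S l)) = (if k = i then w S i else 0)"
    using iS iN by (auto simp: polP_def wS_def algebra_simps)
  finally show ?thesis .
qed

lemma combo: "w S i * (v S k - v (S - {i}) k) + c S i * (b S k - b (S - {i}) k) = 0"
proof (rule fix_zero[OF Q_nonneg Q_stoch beta0 beta(2)])
  fix k
  show "w S i * (v S k - v (S - {i}) k) + c S i * (b S k - b (S - {i}) k) =
         \<beta> * (\<Sum>l\<in>UNIV. Q (S - {i}) k l * (w S i * (v S l - v (S - {i}) l) + c S i * (b S l - b (S - {i}) l)))"
    unfolding lin_sum by (subst dV, subst dB) (simp add: algebra_simps)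
qed

lemma bpos:
  assumes "0 < w S i" shows "w S i \<le> b S i - b (S - {i}) i"
proof -
  have "(if i = i then w S i else 0) \<le> b S i - b (S - {i}) i"
    by (rule fix_ge[OF Q_nonneg Q_stoch beta0 beta(2), where a = "\<lambda>k. if k = i then w S i else 0" and x = "\<lambda>k. b S k - b (S - {i}) k"])
       (use assms in simp, (simp only:)?, rule dB)
  then show ?thesis by simp
qed

lemma rate:
  assumes "0 < w S i"
  shows "(v (S - {i}) i - v S i) / (b S i - b (S - {i}) i) = c S i / w S i"
proof -
  have p: "b S i - b (S - {i}) i > 0" using bpos[OF assms] assms by linarith
  have "v (S - {i}) i - v S i = c S i * (b S i - b (S - {i}) i) / w S i"
    using combo[of i] assms by (simp add: field_simps)
  then show ?thesis using p assms by (simp add: field_simps)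
qed

lemma cw:
  assumes "w S i \<noteq> 0"
  shows "c S j - (c S i / w S i) * w S j = c (S - {i}) j - (c S i / w S i) * w (S - {i}) j"
proof -
  let ?r = "c S i / w S i"
  have dv: "v S k - v (S - {i}) k = - ?r * (b S k - b (S - {i}) k)" for k
    using combo[of k] assms by (simp add: field_simps)
  have e1: "c S j - c (S - {i}) j = - \<beta> * (\<Sum>k\<in>UNIV. (P1 j k - P0 j k) * (v S k - v (S - {i}) k))"
    unfolding c_def using sub_sum[of "\<lambda>k. P1 j k - P0 j k" "v S" "v (S - {i})"] by (simp add: algebra_simps)
  have e2: "- \<beta> * (\<Sum>k\<in>UNIV. (P1 j k - P0 j k) * (v S k - v (S - {i}) k)) = ?r * (\<beta> * (\<Sum>k\<in>UNIV. (P1 j k - P0 j k) * (b S k - b (S - {i}) k)))"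
    unfolding dv scal_sum by simp
  have e3: "\<beta> * (\<Sum>k\<in>UNIV. (P1 j k - P0 j k) * (b S k - b (S - {i}) k)) = w S j - w (S - {i}) j"
    unfolding wS_def using sub_sum[of "\<lambda>k. P1 j k - P0 j k" "b S" "b (S - {i})"] by (simp add: algebra_simps)
  have "c S j - c (S - {i}) j = ?r * (w S j - w (S - {i}) j)" using e1 e2 e3 by simp
  then show ?thesis unfolding right_diff_distrib by linarith
qed

end

lemma hhat_c: "hhat0 \<beta> P0 P1 h0 h1 j = c (- N1) j"
proof -
  have Qe: "Q (- N1) = P1" by (auto simp: polP_def fun_eq_iff)
  have ve: "v (- N1) = disc_val \<beta> P1 h1" unfolding vS_def Qe by (simp cong: if_cong)
  have g: "disc_val \<beta> P1 h1 j = h1 j + \<beta> * (\<Sum>k\<in>UNIV. P1 j k * disc_val \<beta> P1 h1 k)"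
    by (rule disc_bellman[OF P1_nonneg P1_stoch beta0 beta(2)])
  have d: "(\<Sum>k\<in>UNIV. (P1 j k - P0 j k) * disc_val \<beta> P1 h1 k)
      = (\<Sum>k\<in>UNIV. P1 j k * disc_val \<beta> P1 h1 k) - (\<Sum>k\<in>UNIV. P0 j k * disc_val \<beta> P1 h1 k)"
    by (simp add: left_diff_distrib sum_subtractf)
  show ?thesis unfolding hhat0_def c_def ve Let_def d right_diff_distrib using g by linarith
qed

end




lemma set_system_full:
  assumes fin: "finite N" and F: "set_system N F" shows "N \<in> F"
proof -
  have sub: "F \<subseteq> Pow N" and e: "{} \<in> F" and ext: "\<And>S. S \<in> F \<Longrightarrow> S \<noteq> N \<Longrightarrow> \<exists>j\<in>N - S. insert j S \<in> F"
    using F unfolding set_system_def by auto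
  have "\<And>S. S \<in> F \<Longrightarrow> card (N - S) = m \<Longrightarrow> N \<in> F" for m
  proof (induction m)
    case 0
    then have "N - S = {}" using fin by simp
    moreover have "S \<subseteq> N" using sub 0 by auto
    ultimately show ?case using 0 by (metis Diff_eq_empty_iff subset_antisym)
  next
    case (Suc m)
    then have "S \<noteq> N" by auto
    then obtain j where j: "j \<in> N - S" "insert j S \<in> F" using ext Suc.prems by blast
    have "N - insert j S = (N - S) - {j}" by auto
    then have "card (N - insert j S) = m" using j Suc.prems fin by simp
    then show ?case using Suc.IH j by blast
  qed
  from this[of "{}" "card N"] show ?thesis using e by simp
qed

lemma pi_facts:
  fixes N :: "'s set" and \<pi> :: "nat \<Rightarrow> 's"
  assumes fin: "finite N" and mem: "\<And>k. k \<in> {1..card N} \<Longrightarrow> \<pi> k \<in> N - \<pi> ` {1..<k}"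
  shows "\<And>l k. 1 \<le> l \<Longrightarrow> l < k \<Longrightarrow> k \<le> card N \<Longrightarrow> \<pi> l \<noteq> \<pi> k"
    and "\<pi> ` {1..card N} = N"
    and "\<And>m. 1 \<le> m \<Longrightarrow> m \<le> card N \<Longrightarrow> \<pi> ` {m..card N} = N - \<pi> ` {1..<m}"
proof -
  show inj: "\<And>l k. 1 \<le> l \<Longrightarrow> l < k \<Longrightarrow> k \<le> card N \<Longrightarrow> \<pi> l \<noteq> \<pi> k"
  proof -
    fix l k assume a: "1 \<le> l" "l < k" "k \<le> card N"
    then have "\<pi> k \<in> N - \<pi> ` {1..<k}" using mem by simp
    moreover have "\<pi> l \<in> \<pi> ` {1..<k}" using a by simp
    ultimately show "\<pi> l \<noteq> \<pi> k" by auto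
  qed
  have "inj_on \<pi> {1..card N}"
    unfolding inj_on_def by (metis atLeastAtMost_iff inj linorder_neqE_nat)
  then have c: "card (\<pi> ` {1..card N}) = card N" by (simp add: card_image)
  have "\<pi> ` {1..card N} \<subseteq> N" using mem by auto
  then show img: "\<pi> ` {1..card N} = N" using c fin by (simp add: card_subset_eq)
  fix m assume m: "1 \<le> m" "m \<le> card N"
  show "\<pi> ` {m..card N} = N - \<pi> ` {1..<m}"
  proof
    show "\<pi> ` {m..card N} \<subseteq> N - \<pi> ` {1..<m}"
    proof
      fix x assume "x \<in> \<pi> ` {m..card N}"
      then obtain k where k: "k \<in> {m..card N}" "x = \<pi> k" by auto
      have "x \<in> N" using mem[of k] k m by auto
      moreover have "x \<notin> \<pi> ` {1..<m}"
      proof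
        assume "x \<in> \<pi> ` {1..<m}"
        then obtain l where l: "l \<in> {1..<m}" "x = \<pi> l" by auto
        then show False using inj[of l k] k m by auto
      qed
      ultimately show "x \<in> N - \<pi> ` {1..<m}" by simp
    qed
    show "N - \<pi> ` {1..<m} \<subseteq> \<pi> ` {m..card N}"
    proof
      fix x assume x: "x \<in> N - \<pi> ` {1..<m}"
      have "x \<in> \<pi> ` {1..card N}" using x img by simp
      then obtain k where k: "k \<in> {1..card N}" "x = \<pi> k" by blast
      have "\<not> k < m" using x k by auto
      then show "x \<in> \<pi> ` {m..card N}" using k by auto
    qed
  qed
qed




theorem theorem11:
  fixes \<beta> :: real
    and P0 P1 :: "'s::finite \<Rightarrow> 's \<Rightarrow> real"
    and h0 h1 \<theta> :: "'s \<Rightarrow> real"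
    and N1 :: "'s set"
    and F :: "'s set set"
    and \<pi> :: "nat \<Rightarrow> 's"
    and \<nu> :: "'s \<Rightarrow> real"
  assumes beta: "0 < \<beta>" "\<beta> < 1"
    and P0_nonneg: "\<And>i j. 0 \<le> P0 i j" and P0_stoch: "\<And>i. (\<Sum>j\<in>UNIV. P0 i j) = 1"
    and P1_nonneg: "\<And>i j. 0 \<le> P1 i j" and P1_stoch: "\<And>i. (\<Sum>j\<in>UNIV. P1 i j) = 1"
    and N1_same: "\<And>i j. i \<in> N1 \<Longrightarrow> P1 i j = P0 i j"
    and theta_pos: "\<And>j. 0 < \<theta> j"
    and F: "set_system (- N1) F"
    and PCL_i: "\<And>S j. S \<in> F \<Longrightarrow> j \<in> - N1 \<Longrightarrow> 0 < wS \<beta> P0 P1 \<theta> N1 S j"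
    and AG: "AG_output (- N1) F (wS \<beta> P0 P1 \<theta> N1) (hhat0 \<beta> P0 P1 h0 h1) \<pi> \<nu>"
    and PCL_ii: "\<And>k l. 1 \<le> k \<Longrightarrow> k \<le> l \<Longrightarrow> l \<le> card (- N1) \<Longrightarrow> \<nu> (\<pi> k) \<le> \<nu> (\<pi> l)"
    and w_mono: "\<And>S T j. S \<in> F \<Longrightarrow> T \<in> F \<Longrightarrow> j \<in> S \<Longrightarrow> S \<subset> T \<Longrightarrow>
                   wS \<beta> P0 P1 \<theta> N1 S j \<le> wS \<beta> P0 P1 \<theta> N1 T j"
  shows "\<forall>j \<in> - N1. \<nu> j = Max {(vS \<beta> P0 P1 h0 h1 N1 (S - {j}) j - vS \<beta> P0 P1 h0 h1 N1 S j)
                                 / (bS \<beta> P0 P1 \<theta> N1 S j - bS \<beta> P0 P1 \<theta> N1 (S - {j}) j) | S.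
                               S \<in> (\<lambda>k. \<pi> ` {k..card (- N1)}) ` {1..card (- N1)} \<and> j \<in> S}"
proof -
  interpret rb \<beta> P0 P1 h0 h1 \<theta> N1
    by unfold_locales (use beta P0_nonneg P0_stoch P1_nonneg P1_stoch in auto)
  define n where "n = card (- N1)"
  define Sk where "Sk = (\<lambda>k. - N1 - \<pi> ` {1..<k})"
  let ?hh = "hhat0 \<beta> P0 P1 h0 h1"
  obtain y where Y: "\<And>k. k \<in> {1..n} \<Longrightarrow> \<pi> k \<in> bdry F (Sk k)
      \<and> y k = (?hh (\<pi> k) - (\<Sum>l\<in>{1..<k}. y l * w (Sk l) (\<pi> k))) / w (Sk k) (\<pi> k)
      \<and> \<nu> (\<pi> k) = (\<Sum>l\<in>{1..k}. y l)"
    using AG unfolding AG_output_def Let_def Sk_def n_def by blast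
  define V where "V = (\<lambda>k. \<Sum>l\<in>{1..k}. y l)"
  have fin: "finite (- N1)" by simp
  have piS: "\<pi> k \<in> Sk k" and SkF1: "Sk k - {\<pi> k} \<in> F" if "k \<in> {1..n}" for k
    using Y[OF that] unfolding bdry_def by auto
  have piN: "\<pi> k \<in> - N1 - \<pi> ` {1..<k}" if "k \<in> {1..card (- N1)}" for k
    using piS[of k] that unfolding Sk_def n_def by auto
  note pf = pi_facts[OF fin piN]
  have Sk_Suc: "Sk (Suc k) = Sk k - {\<pi> k}" if "1 \<le> k" for k
  proof -
    have "{1..<Suc k} = insert k {1..<k}" using that by auto
    then show ?thesis unfolding Sk_def by auto
  qed
  have NF: "- N1 \<in> F" by (rule set_system_full[OF fin F])
  have Sk1: "Sk 1 = - N1" unfolding Sk_def by simp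
  have SkF: "Sk k \<in> F" if "k \<in> {1..n}" for k
    using that
  proof (induction k)
    case 0 then show ?case by simp
  next
    case (Suc k)
    show ?case
    proof (cases "k = 0")
      case True then show ?thesis using NF Sk1 by simp
    next
      case False
      then have "k \<in> {1..n}" using Suc.prems by auto
      then show ?thesis using SkF1[of k] Sk_Suc[of k] by simp
    qed
  qed
  have SkN: "Sk k \<subseteq> - N1" for k unfolding Sk_def by auto
  have wpos: "0 < w (Sk k) j" if "k \<in> {1..n}" "j \<in> - N1" for k j
    using PCL_i[OF SkF[OF that(1)] that(2)] .
  have piN1: "\<pi> k \<notin> N1" if "k \<in> {1..n}" for k using piS[OF that] SkN by auto
  have nuV: "\<nu> (\<pi> k) = V k" if "k \<in> {1..n}" for k using Y[OF that] unfolding V_def by simp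
  have V_Suc: "V (Suc k) = V k + y (Suc k)" for k unfolding V_def by simp
  have R: "\<forall>j. ?hh j - (\<Sum>l\<in>{1..<k}. y l * w (Sk l) j) = c (Sk k) j - V (k - 1) * w (Sk k) j"
    if "k \<in> {1..n}" for k
    using that
  proof (induction k)
    case 0 then show ?case by simp
  next
    case (Suc k)
    show ?case
    proof (cases "k = 0")
      case True then show ?thesis using Sk1 hhat_c by (simp add: V_def)
    next
      case False
      then have k: "k \<in> {1..n}" using Suc.prems by auto
      have IH: "?hh j - (\<Sum>l\<in>{1..<k}. y l * w (Sk l) j) = c (Sk k) j - V (k - 1) * w (Sk k) j" for j
        using Suc.IH[OF k] by blast
      have wp: "0 < w (Sk k) (\<pi> k)" using wpos[OF k] piS[OF k] SkN by auto
      have yk: "y k = (c (Sk k) (\<pi> k) - V (k - 1) * w (Sk k) (\<pi> k)) / w (Sk k) (\<pi> k)"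
        using Y[OF k] IH[of "\<pi> k"] by simp
      have Vk1: "V k = V (k - 1) + y k" using V_Suc[of "k - 1"] False by simp
      have Vk: "V k = c (Sk k) (\<pi> k) / w (Sk k) (\<pi> k)"
        using Vk1 yk wp by (simp add: field_simps)
      show ?thesis
      proof
        fix j
        have s: "(\<Sum>l\<in>{1..<Suc k}. y l * w (Sk l) j) = (\<Sum>l\<in>{1..<k}. y l * w (Sk l) j) + y k * w (Sk k) j"
          using False by (simp add: atLeastLessThanSuc)
        have "?hh j - (\<Sum>l\<in>{1..<Suc k}. y l * w (Sk l) j) = c (Sk k) j - V k * w (Sk k) j"
          unfolding s using IH[of j] Vk1 by (simp add: algebra_simps)
        also have "\<dots> = c (Sk (Suc k)) j - V k * w (Sk (Suc k)) j"
          unfolding Vk using cw[OF piS[OF k] piN1[OF k]] wp False Sk_Suc[of k] by simp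
        finally show "?hh j - (\<Sum>l\<in>{1..<Suc k}. y l * w (Sk l) j) = c (Sk (Suc k)) j - V (Suc k - 1) * w (Sk (Suc k)) j"
          by simp
      qed
    qed
  qed
  have Vk: "V k = c (Sk k) (\<pi> k) / w (Sk k) (\<pi> k)" if k: "k \<in> {1..n}" for k
  proof -
    have wp: "0 < w (Sk k) (\<pi> k)" using wpos[OF k] piS[OF k] SkN by auto
    have IH: "?hh (\<pi> k) - (\<Sum>l\<in>{1..<k}. y l * w (Sk l) (\<pi> k)) = c (Sk k) (\<pi> k) - V (k - 1) * w (Sk k) (\<pi> k)"
      using R[OF k] by blast
    have yk: "y k = (c (Sk k) (\<pi> k) - V (k - 1) * w (Sk k) (\<pi> k)) / w (Sk k) (\<pi> k)"
      using Y[OF k] IH by simp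
    have Vk1: "V k = V (k - 1) + y k" using V_Suc[of "k - 1"] k by simp
    show ?thesis using Vk1 yk wp by (simp add: field_simps)
  qed
  have cstep: "c (Sk m) j - V m * w (Sk m) j = c (Sk (Suc m)) j - V m * w (Sk (Suc m)) j"
    if m: "m \<in> {1..n}" for m j
  proof -
    have wp: "0 < w (Sk m) (\<pi> m)" using wpos[OF m] piS[OF m] SkN by auto
    have ss: "Sk (Suc m) = Sk m - {\<pi> m}" using Sk_Suc[of m] m by simp
    show ?thesis unfolding Vk[OF m] ss using cw[OF piS[OF m] piN1[OF m]] wp m by simp
  qed
  have memSk: "\<pi> k \<in> Sk m \<longleftrightarrow> m \<le> k" if "k \<in> {1..n}" "m \<in> {1..n}" for k m
  proof
    assume "\<pi> k \<in> Sk m"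
    then show "m \<le> k" unfolding Sk_def using that by (auto simp: not_le[symmetric])
  next
    assume "m \<le> k"
    then have "\<pi> k \<in> \<pi> ` {m..card (- N1)}" using that unfolding n_def by auto
    moreover have "\<pi> ` {m..card (- N1)} = Sk m" using pf(3)[of m] that unfolding Sk_def n_def by auto
    ultimately show "\<pi> k \<in> Sk m" by simp
  qed
  show ?thesis
  proof
    fix j assume j: "j \<in> - N1"
    then have "j \<in> \<pi> ` {1..n}" using pf(2) unfolding n_def by simp
    then obtain k where k: "k \<in> {1..n}" "j = \<pi> k" by blast
    let ?rate = "\<lambda>S. (v (S - {j}) j - v S j) / (b S j - b (S - {j}) j)"
    have rateSk: "?rate (Sk m) = c (Sk m) j / w (Sk m) j" if m: "m \<in> {1..k}" for m
    proof -
      have m': "m \<in> {1..n}" using m k by auto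
      have "j \<in> Sk m" using memSk[OF k(1) m'] m k by simp
      then show ?thesis using rate[of j "Sk m"] wpos[OF m' j] j by simp
    qed
    have fle: "c (Sk m) j - V k * w (Sk m) j \<le> 0" if m: "1 \<le> m" "m \<le> k" for m
      using m(2)
    proof (induction m rule: inc_induct)
      case base
      then show ?case using Vk[OF k(1)] wpos[OF k(1) j] k by simp
    next
      case (step m')
      have mn: "m' \<in> {1..n}" using step m k by auto
      have m1n: "Suc m' \<in> {1..n}" using step k by auto
      have e: "c (Sk m') j - V k * w (Sk m') j = (c (Sk (Suc m')) j - V k * w (Sk (Suc m')) j)
          + (V m' - V k) * (w (Sk m') j - w (Sk (Suc m')) j)"
        using cstep[OF mn, of j] by (simp add: algebra_simps)
      have "V m' \<le> V k" using PCL_ii[of m' k] nuV[OF mn] nuV[OF k(1)] step k m by (simp add: n_def)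
      moreover have "w (Sk (Suc m')) j \<le> w (Sk m') j"
      proof (rule w_mono[OF SkF[OF m1n] SkF[OF mn]])
        show "j \<in> Sk (Suc m')" using memSk[OF k(1) m1n] step k by simp
        show "Sk (Suc m') \<subset> Sk m'" using Sk_Suc[of m'] piS[OF mn] m step by auto
      qed
      ultimately have "(V m' - V k) * (w (Sk m') j - w (Sk (Suc m')) j) \<le> 0"
        by (intro mult_nonpos_nonneg) auto
      then show ?case using e step.IH by linarith
    qed
    let ?A = "{?rate S | S. S \<in> (\<lambda>k. \<pi> ` {k..card (- N1)}) ` {1..card (- N1)} \<and> j \<in> S}"
    have Aeq: "(\<lambda>k. \<pi> ` {k..card (- N1)}) ` {1..card (- N1)} = Sk ` {1..n}"
      using pf(3) unfolding Sk_def n_def by (auto simp: image_def)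
    show "\<nu> j = Max ?A"
    proof (rule Max_eqI[symmetric])
      have "?A \<subseteq> ?rate ` (Sk ` {1..n})" unfolding Aeq by auto
      then show "finite ?A" by (rule finite_subset) simp
    next
      fix z assume "z \<in> ?A"
      then obtain m where m: "m \<in> {1..n}" "j \<in> Sk m" "z = ?rate (Sk m)" unfolding Aeq by auto
      have mk: "m \<le> k" using memSk[OF k(1) m(1)] m k by simp
      have "z = c (Sk m) j / w (Sk m) j" using rateSk[of m] m mk by simp
      also have "\<dots> \<le> V k" using fle[of m] m mk wpos[OF m(1) j] by (simp add: pos_divide_le_eq)
      finally show "z \<le> \<nu> j" using nuV[OF k(1)] k by simp
    next
      have "j \<in> Sk k" using memSk[OF k(1) k(1)] k by simp
      moreover have "?rate (Sk k) = \<nu> j" using rateSk[of k] k Vk[OF k(1)] nuV[OF k(1)] by simp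
      moreover have "Sk k \<in> Sk ` {1..n}" using k(1) by blast
      ultimately have "\<exists>S. \<nu> j = ?rate S \<and> S \<in> Sk ` {1..n} \<and> j \<in> S" by metis
      then show "\<nu> j \<in> ?A" unfolding Aeq by simp
    qed
  qed
qed


end
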